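(* Let $P(x)=x^\alpha=x_1^{\alpha_1}\cdots x_d^{\alpha_d}$ for $\alpha=(\alpha_1,\dots,\alpha_d)\in\mathbb{N}_0^d$ with $\|\alpha\|_1=k\ge2$. For any $W,L\in\mathbb{N}$ there exists a ReLU network $\phi:\mathbb{R}^d\to\mathbb{R}$, $\phi\in\mathcal{NN}(9W+k-1,(k-1)(L+1))$, such that for all $x,y\in[-1,1]^d$, $\phi(x)\in[-1,1]$ and $$|\phi(x)-P(x)|\le6(k-1)W^{-L},\qquad|\phi(x)-\phi(y)|\le7^{k-1}\|\alpha\|_\infty\|x-y\|_1.$$
   Context: $\sigma(x)=\max(x,0)$. $\mathcal{NN}(W,L)$: functions $\phi(x)=T_L(\sigma(T_{L-1}(\cdots\sigma(T_0(x))\cdots)))$ with affine maps $T_l$, ReLU componentwise, all hidden layer sizes $\le W$ and depth $\le L$. $\|\alpha\|_1=\sum_i\alpha_i$, $\|\alpha\|_\infty=\max_i\alpha_i$. *)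

theory Defs
  imports Complex_Main
begin

text \<open>Vectors in R^n are represented as functions nat => real, of which only the
  components with index < n are used.\<close>

definition relu :: "real \<Rightarrow> real" where
  "relu x = max x 0"

definition affine_map :: "(nat \<Rightarrow> nat \<Rightarrow> real) \<Rightarrow> (nat \<Rightarrow> real) \<Rightarrow> nat \<Rightarrow> (nat \<Rightarrow> real) \<Rightarrow> (nat \<Rightarrow> real)" where
  "affine_map A b n x = (\<lambda>i. (\<Sum>j<n. A i j * x j) + b i)"

text \<open>A layer is (A, b, n) where n is its input dimension. The list
  [T_0, ..., T_L] is evaluated as T_L (sigma (T_{L-1} ( ... sigma (T_0 x)))).\<close>

type_synonym layer = "(nat \<Rightarrow> nat \<Rightarrow> real) \<times> (nat \<Rightarrow> real) \<times> nat"

fun eval_layers :: "layer list \<Rightarrow> (nat \<Rightarrow> real) \<Rightarrow> (nat \<Rightarrow> real)" where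
  "eval_layers [] x = x"
| "eval_layers [(A, b, n)] x = affine_map A b n x"
| "eval_layers ((A, b, n) # T # Ts) x = eval_layers (T # Ts) (\<lambda>i. relu (affine_map A b n x i))"

text \<open>NN d W L: realizations R^d -> R of ReLU networks with input dimension d,
  output dimension 1 (component 0 of the last affine map), all hidden layer sizes
  (= input dimensions of T_1, ..., T_L) at most W and depth (number of hidden
  layers) at most L.\<close>

definition NN :: "nat \<Rightarrow> nat \<Rightarrow> nat \<Rightarrow> ((nat \<Rightarrow> real) \<Rightarrow> real) set" where
  "NN d W L = {\<phi>. \<exists>Ts. Ts \<noteq> [] \<and> length Ts \<le> L + 1 \<and>
      snd (snd (hd Ts)) = d \<and>
      (\<forall>T\<in>set (tl Ts). snd (snd T) \<le> W) \<and>
      (\<forall>x. \<phi> x = eval_layers Ts x 0)}"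

end

theory Submission
  imports Defs
begin


fun run :: "layer list \<Rightarrow> (nat \<Rightarrow> real) \<Rightarrow> (nat \<Rightarrow> real)" where
  "run [] x = x"
| "run ((A, b, n) # Ts) x = run Ts (\<lambda>i. relu (affine_map A b n x i))"

lemma eval_layers_Cons2:
  "Ts \<noteq> [] \<Longrightarrow> eval_layers ((A, b, n) # Ts) x = eval_layers Ts (\<lambda>i. relu (affine_map A b n x i))"
  by (cases Ts) auto

lemma eval_run: "eval_layers (Ts @ [(A, b, n)]) x = affine_map A b n (run Ts x)"
proof (induction Ts arbitrary: x)
  case Nil then show ?case by simp
next
  case (Cons T Ts)
  obtain A' b' n' where T: "T = (A', b', n')" by (cases T) auto
  show ?case using Cons by (simp add: T eval_layers_Cons2)
qed

lemma run_append: "run (Ts @ Us) x = run Us (run Ts x)"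
proof (induction Ts arbitrary: x)
  case Nil then show ?case by simp
next
  case (Cons T Ts)
  obtain A' b' n' where T: "T = (A', b', n')" by (cases T) auto
  show ?case using Cons by (simp add: T)
qed

definition wfn :: "nat \<Rightarrow> nat \<Rightarrow> layer list \<Rightarrow> nat \<Rightarrow> bool" where
  "wfn d w Ts n = (case Ts of [] \<Rightarrow> n = d
     | T # R \<Rightarrow> snd (snd T) = d \<and> (\<forall>T'\<in>set R. snd (snd T') \<le> w) \<and> n \<le> w)"

definition realizes :: "nat \<Rightarrow> nat \<Rightarrow> nat \<Rightarrow> ((nat \<Rightarrow> real) \<Rightarrow> (nat \<Rightarrow> real)) \<Rightarrow> bool" where
  "realizes d w l f = (\<exists>Ts A b n. length Ts = l \<and> wfn d w Ts n \<and> (\<forall>x. f x = affine_map A b n (run Ts x)))"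

lemma realizes_NN:
  assumes "realizes d w l f" "l \<le> L" "w \<le> W"
  shows "(\<lambda>x. f x 0) \<in> NN d W L"
proof -
  obtain Ts A b n where h: "length Ts = l" "wfn d w Ts n" "\<forall>x. f x = affine_map A b n (run Ts x)"
    using assms(1) unfolding realizes_def by blast
  show ?thesis unfolding NN_def
  proof (intro CollectI exI[of _ "Ts @ [(A, b, n)]"] conjI)
    show "Ts @ [(A, b, n)] \<noteq> []" by simp
    show "length (Ts @ [(A, b, n)]) \<le> L + 1" using h assms by simp
    show "snd (snd (hd (Ts @ [(A, b, n)]))) = d" using h(2) by (cases Ts) (auto simp: wfn_def)
    show "\<forall>T\<in>set (tl (Ts @ [(A, b, n)])). snd (snd T) \<le> W" using h(2) assms(3)
      by (cases Ts) (auto simp: wfn_def)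
    show "\<forall>x. f x 0 = eval_layers (Ts @ [(A, b, n)]) x 0" using h(3) by (simp add: eval_run)
  qed
qed

lemma affine_affine:
  "affine_map A b n (affine_map M c m x) =
   affine_map (\<lambda>i j. \<Sum>l<n. A i l * M l j) (\<lambda>i. (\<Sum>l<n. A i l * c l) + b i) m x"
proof
  fix i
  have "(\<Sum>l<n. A i l * ((\<Sum>j<m. M l j * x j) + c l)) =
        (\<Sum>l<n. \<Sum>j<m. A i l * M l j * x j) + (\<Sum>l<n. A i l * c l)"
    by (simp add: distrib_left sum.distrib sum_distrib_left mult.assoc)
  also have "(\<Sum>l<n. \<Sum>j<m. A i l * M l j * x j) = (\<Sum>j<m. (\<Sum>l<n. A i l * M l j) * x j)"
    by (subst sum.swap) (simp add: sum_distrib_right)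
  finally show "affine_map A b n (affine_map M c m x) i =
   affine_map (\<lambda>i j. \<Sum>l<n. A i l * M l j) (\<lambda>i. (\<Sum>l<n. A i l * c l) + b i) m x i"
    unfolding affine_map_def by simp
qed

lemma realizes_mono: "realizes d w l f \<Longrightarrow> w \<le> w' \<Longrightarrow> realizes d w' l f"
proof -
  assume "realizes d w l f" "w \<le> w'"
  then obtain Ts A b n where h: "length Ts = l" "wfn d w Ts n" "\<forall>x. f x = affine_map A b n (run Ts x)"
    unfolding realizes_def by blast
  have "wfn d w' Ts n" using h(2) \<open>w \<le> w'\<close> unfolding wfn_def
    by (cases Ts) auto
  then show ?thesis using h unfolding realizes_def by blast
qed

lemma realizes_cong: "realizes d w l f \<Longrightarrow> (\<And>x. g x = f x) \<Longrightarrow> realizes d w l g"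
proof -
  assume "realizes d w l f" "\<And>x. g x = f x"
  then have "g = f" by auto
  then show ?thesis using \<open>realizes d w l f\<close> by simp
qed

lemma realizes_affine: "realizes d w 0 (affine_map A b d)"
  unfolding realizes_def wfn_def by (intro exI[of _ "[]"]) auto

lemma realizes_one:
  assumes "n \<le> w" "\<And>x. f x = affine_map A2 b2 n (\<lambda>i. relu (affine_map A1 b1 d x i))"
  shows "realizes d w 1 f"
  unfolding realizes_def wfn_def
  by (intro exI[of _ "[(A1, b1, d)]"] exI[of _ A2] exI[of _ b2] exI[of _ n]) (use assms in auto)

lemma realizes_post:
  assumes "realizes d w l f"
  shows "realizes d w l (\<lambda>x. affine_map M c m (f x))"
proof -
  obtain Ts A b n where h: "length Ts = l" "wfn d w Ts n" "\<forall>x. f x = affine_map A b n (run Ts x)"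
    using assms unfolding realizes_def by blast
  show ?thesis unfolding realizes_def
    by (intro exI[of _ Ts] exI conjI) (use h in \<open>auto simp: affine_affine\<close>)
qed

lemma realizes_comp:
  assumes f: "realizes d w1 l1 f" and g: "realizes m w2 l2 g" and "1 \<le> l2"
  shows "realizes d (max w1 w2) (l1 + l2) (\<lambda>x. g (f x))"
proof -
  obtain Ts1 A1 b1 n1 where h1: "length Ts1 = l1" "wfn d w1 Ts1 n1" "\<forall>x. f x = affine_map A1 b1 n1 (run Ts1 x)"
    using f unfolding realizes_def by blast
  obtain Ts2 A2 b2 n2 where h2: "length Ts2 = l2" "wfn m w2 Ts2 n2" "\<forall>x. g x = affine_map A2 b2 n2 (run Ts2 x)"
    using g unfolding realizes_def by blast
  obtain B c m' R where Ts2: "Ts2 = (B, c, m') # R" using h2(1) \<open>1 \<le> l2\<close>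
    by (cases Ts2) auto
  define B' where "B' = (\<lambda>i j. \<Sum>l<m'. B i l * A1 l j)"
  define c' where "c' = (\<lambda>i. (\<Sum>l<m'. B i l * b1 l) + c i)"
  let ?Ts = "Ts1 @ (B', c', n1) # R"
  have "\<forall>x. g (f x) = affine_map A2 b2 n2 (run ?Ts x)"
    using h1(3) h2(3) by (simp add: Ts2 run_append affine_affine B'_def c'_def)
  moreover have "length ?Ts = l1 + l2" using h1 h2 Ts2 by simp
  moreover have "wfn d (max w1 w2) ?Ts n2"
    using h1(2) h2(2) unfolding Ts2 wfn_def
    by (cases Ts1) (auto simp: le_max_iff_disj)
  ultimately show ?thesis unfolding realizes_def by blast
qed


definition cat :: "nat \<Rightarrow> (nat \<Rightarrow> real) \<Rightarrow> (nat \<Rightarrow> real) \<Rightarrow> nat \<Rightarrow> real" where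
  "cat m u v = (\<lambda>i. if i < m then u i else v (i - m))"

definition blk :: "nat \<Rightarrow> nat \<Rightarrow> (nat \<Rightarrow> nat \<Rightarrow> real) \<Rightarrow> (nat \<Rightarrow> nat \<Rightarrow> real) \<Rightarrow> nat \<Rightarrow> nat \<Rightarrow> real" where
  "blk s n1 A1 A2 = (\<lambda>i j. if i < s then (if j < n1 then A1 i j else 0)
      else (if j < n1 then 0 else A2 (i - s) (j - n1)))"

lemma sum_split_add: "(\<Sum>j<a + b. f j) = (\<Sum>j<a. f j) + (\<Sum>j<b. f (a + j :: nat))"
  by (induction b) (auto simp: add.assoc)

lemma affine_blk:
  "affine_map (blk s n1 A1 A2) (cat s b1 b2) (n1 + n2) (cat n1 z1 z2) =
   cat s (affine_map A1 b1 n1 z1) (affine_map A2 b2 n2 z2)"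
proof
  fix i
  show "affine_map (blk s n1 A1 A2) (cat s b1 b2) (n1 + n2) (cat n1 z1 z2) i =
   cat s (affine_map A1 b1 n1 z1) (affine_map A2 b2 n2 z2) i"
    unfolding affine_map_def sum_split_add by (simp add: blk_def cat_def)
qed

definition nxt :: "nat \<Rightarrow> layer list \<Rightarrow> nat" where
  "nxt m R = (case R of [] \<Rightarrow> m | T # _ \<Rightarrow> snd (snd T))"

fun stk :: "nat \<Rightarrow> layer list \<Rightarrow> layer list \<Rightarrow> layer list" where
  "stk m ((A1, b1, n1) # R1) ((A2, b2, n2) # R2) =
     (blk (nxt m R1) n1 A1 A2, cat (nxt m R1) b1 b2, n1 + n2) # stk m R1 R2"
| "stk m _ _ = []"

lemma relu_cat: "(\<lambda>i. relu (cat s u v i)) = cat s (\<lambda>i. relu (u i)) (\<lambda>i. relu (v i))"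
  by (auto simp: cat_def)

lemma run_stk:
  "length R1 = length R2 \<Longrightarrow>
   run (stk m R1 R2) (cat (nxt m R1) z1 z2) = cat m (run R1 z1) (run R2 z2)"
proof (induction R1 R2 arbitrary: z1 z2 rule: list_induct2)
  case Nil then show ?case by (simp add: nxt_def)
next
  case (Cons x xs y ys)
  obtain A1 b1 n1 where x: "x = (A1, b1, n1)" by (cases x) auto
  obtain A2 b2 n2 where y: "y = (A2, b2, n2)" by (cases y) auto
  show ?case using Cons
    by (simp add: x y nxt_def affine_blk relu_cat)
qed

lemma stk_len: "length R1 = length R2 \<Longrightarrow> length (stk m R1 R2) = length R1"
proof (induction R1 R2 rule: list_induct2)
  case (Cons x xs y ys)
  then show ?case by (cases x; cases y) auto
qed simp

lemma stk_width: "length R1 = length R2 \<Longrightarrow> \<forall>T\<in>set R1. snd (snd T) \<le> w1 \<Longrightarrow>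
   \<forall>T\<in>set R2. snd (snd T) \<le> w2 \<Longrightarrow> \<forall>T\<in>set (stk m R1 R2). snd (snd T) \<le> w1 + w2"
proof (induction R1 R2 rule: list_induct2)
  case (Cons x xs y ys)
  then show ?case by (cases x; cases y) (auto simp: add_mono)
qed simp

lemma realizes_par:
  assumes f: "realizes d w1 l f" and g: "realizes d w2 l g"
  shows "realizes d (w1 + w2) l (\<lambda>x. cat m (f x) (g x))"
proof -
  obtain Ts1 A1 b1 n1 where h1: "length Ts1 = l" "wfn d w1 Ts1 n1" "\<forall>x. f x = affine_map A1 b1 n1 (run Ts1 x)"
    using f unfolding realizes_def by blast
  obtain Ts2 A2 b2 n2 where h2: "length Ts2 = l" "wfn d w2 Ts2 n2" "\<forall>x. g x = affine_map A2 b2 n2 (run Ts2 x)"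
    using g unfolding realizes_def by blast
  show ?thesis
  proof (cases l)
    case 0
    then have z: "Ts1 = []" "Ts2 = []" "n1 = d" "n2 = d" using h1 h2 by (auto simp: wfn_def)
    have "cat m (f x) (g x) = affine_map (\<lambda>i j. if i < m then A1 i j else A2 (i - m) j) (cat m b1 b2) d x" for x
    proof
      fix i
      show "cat m (f x) (g x) i = affine_map (\<lambda>i j. if i < m then A1 i j else A2 (i - m) j) (cat m b1 b2) d x i"
        using h1(3) h2(3) z by (cases "i < m") (simp_all add: cat_def affine_map_def)
    qed
    then show ?thesis unfolding realizes_def using 0
      by (intro exI[of _ "[]"] exI[of _ "\<lambda>i j. if i < m then A1 i j else A2 (i - m) j"] exI[of _ "cat m b1 b2"] exI[of _ d])
        (auto simp: wfn_def)
  next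
    case (Suc l')
    obtain C1 c1 e1 R1 where T1: "Ts1 = (C1, c1, e1) # R1" using h1(1) Suc by (cases Ts1) auto
    obtain C2 c2 e2 R2 where T2: "Ts2 = (C2, c2, e2) # R2" using h2(1) Suc by (cases Ts2) auto
    have e: "e1 = d" "e2 = d" using h1(2) h2(2) T1 T2 by (auto simp: wfn_def)
    have len: "length R1 = length R2" using h1(1) h2(1) T1 T2 by simp
    define s0 where "s0 = nxt n1 R1"
    define F where "F = ((\<lambda>i j. if i < s0 then C1 i j else C2 (i - s0) j), cat s0 c1 c2, d)"
    have first: "(\<lambda>i. relu (affine_map (\<lambda>i j. if i < s0 then C1 i j else C2 (i - s0) j) (cat s0 c1 c2) d x i))
       = cat s0 (\<lambda>i. relu (affine_map C1 c1 d x i)) (\<lambda>i. relu (affine_map C2 c2 d x i))" for x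
      by (rule ext) (simp add: cat_def affine_map_def)
    have "run (F # stk n1 R1 R2) x = cat n1 (run Ts1 x) (run Ts2 x)" for x
    proof -
      have "run (F # stk n1 R1 R2) x = run (stk n1 R1 R2) (cat s0 (\<lambda>i. relu (affine_map C1 c1 d x i)) (\<lambda>i. relu (affine_map C2 c2 d x i)))"
        unfolding F_def by (simp add: first)
      also have "\<dots> = cat n1 (run Ts1 x) (run Ts2 x)"
        using run_stk[OF len, of n1] unfolding s0_def[symmetric] by (simp add: T1 T2 e)
      finally show ?thesis .
    qed
    then have "\<forall>x. cat m (f x) (g x) = affine_map (blk m n1 A1 A2) (cat m b1 b2) (n1 + n2) (run (F # stk n1 R1 R2) x)"
      using h1(3) h2(3) by (simp add: affine_blk)
    moreover have "length (F # stk n1 R1 R2) = l" using len h1(1) T1 stk_len by simp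
    moreover have "wfn d (w1 + w2) (F # stk n1 R1 R2) (n1 + n2)"
    proof -
      have "\<forall>T\<in>set R1. snd (snd T) \<le> w1" "n1 \<le> w1" using h1(2) unfolding T1 wfn_def by auto
      moreover have "\<forall>T\<in>set R2. snd (snd T) \<le> w2" "n2 \<le> w2" using h2(2) unfolding T2 wfn_def by auto
      ultimately show ?thesis using stk_width[OF len, of w1 w2 n1] unfolding wfn_def F_def
        by (simp add: add_mono)
    qed
    ultimately show ?thesis unfolding realizes_def by blast
  qed
qed



definition tri :: "real \<Rightarrow> real" where
  "tri y = (if even \<lfloor>y\<rfloor> then y - of_int \<lfloor>y\<rfloor> else of_int \<lfloor>y\<rfloor> + 1 - y)"

definition Qf :: "real \<Rightarrow> real" where
  "Qf y = (2 * of_int \<lfloor>y\<rfloor> + 1) * y - of_int \<lfloor>y\<rfloor> ^ 2 - of_int \<lfloor>y\<rfloor>"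

lemma floor_cases:
  fixes y :: real and j :: int
  assumes "of_int j \<le> y" "y \<le> of_int j + 1"
  shows "\<lfloor>y\<rfloor> = j \<or> (\<lfloor>y\<rfloor> = j + 1 \<and> y = of_int j + 1)"
proof (cases "y < of_int j + 1")
  case True
  then have "\<lfloor>y\<rfloor> = j" using assms by (simp add: floor_eq_iff)
  then show ?thesis by simp
next
  case False
  then have "y = of_int j + 1" using assms by simp
  then show ?thesis by simp
qed

lemma Qf_eq:
  fixes y :: real and j :: int
  assumes "of_int j \<le> y" "y \<le> of_int j + 1"
  shows "Qf y = (2 * of_int j + 1) * y - of_int j ^ 2 - of_int j"
  using floor_cases[OF assms] unfolding Qf_def
  by (auto simp: algebra_simps power2_eq_square)

lemma tri_eq:
  fixes y :: real and j :: int
  assumes "of_int j \<le> y" "y \<le> of_int j + 1"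
  shows "tri y = (if even j then y - of_int j else of_int j + 1 - y)"
  using floor_cases[OF assms] unfolding tri_def
  by auto

lemma tri_neg: "tri (- y) = tri y"
proof -
  define j where "j = \<lfloor>y\<rfloor>"
  have a: "of_int j \<le> y" "y \<le> of_int j + 1" unfolding j_def by linarith+
  have b: "of_int (- j - 1) \<le> - y" "- y \<le> of_int (- j - 1) + 1" using a by simp_all
  show ?thesis using tri_eq[OF a] tri_eq[OF b] by auto
qed

lemma tri_shift: "tri (y + 2 * of_int m) = tri y"
proof -
  define j where "j = \<lfloor>y\<rfloor>"
  have a: "of_int j \<le> y" "y \<le> of_int j + 1" unfolding j_def by linarith+
  have b: "of_int (j + 2 * m) \<le> y + 2 * of_int m" "y + 2 * of_int m \<le> of_int (j + 2 * m) + 1" using a by simp_all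
  show ?thesis using tri_eq[OF a] tri_eq[OF b] by auto
qed

lemma tri_range: "0 \<le> tri y" "tri y \<le> 1"
  unfolding tri_def by (auto simp: algebra_simps; linarith)+

lemma tri_comp: "tri (real n * tri y) = tri (real n * y)"
proof -
  define j where "j = \<lfloor>y\<rfloor>"
  have a: "of_int j \<le> y" "y \<le> of_int j + 1" unfolding j_def by linarith+
  show ?thesis
  proof (cases "even j")
    case True
    then obtain m where m: "j = 2 * m" by blast
    have t: "tri y = y - 2 * of_int m" using tri_eq[OF a] True m by simp
    have "real n * tri y = real n * y + 2 * of_int (- (int n * m))"
      unfolding t by (simp add: algebra_simps)
    then have "tri (real n * tri y) = tri (real n * y + 2 * of_int (- (int n * m)))" by (simp only:)
    also have "\<dots> = tri (real n * y)" by (rule tri_shift)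
    finally show ?thesis .
  next
    case False
    then obtain m where m: "j + 1 = 2 * m" by (metis even_plus_one_iff evenE)
    have "real n * tri y = - (real n * y) + 2 * of_int (int n * m)"
    proof -
      have "real n * tri y = real n * (of_int (j + 1) - y)" using tri_eq[OF a] False by simp
      also have "\<dots> = real n * (2 * of_int m - y)" using m by (metis of_int_mult of_int_numeral)
      finally show ?thesis by (simp add: algebra_simps)
    qed
    then have "tri (real n * tri y) = tri (- (real n * y) + 2 * of_int (int n * m))" by (simp only:)
    also have "\<dots> = tri (- (real n * y))" by (rule tri_shift)
    also have "\<dots> = tri (real n * y)" by (rule tri_neg)
    finally show ?thesis .
  qed
qed


lemma Qf_key: "real n ^ 2 * Qf y - real n ^ 2 * tri y + Qf (real n * tri y) = Qf (real n * y)"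
proof -
  define j where "j = \<lfloor>y\<rfloor>"
  define J where "J = \<lfloor>real n * y\<rfloor>"
  have a: "of_int j \<le> y" "y \<le> of_int j + 1" unfolding j_def by linarith+
  have b: "of_int J \<le> real n * y" "real n * y \<le> of_int J + 1" unfolding J_def by linarith+
  have q1: "Qf y = (2 * of_int j + 1) * y - of_int j ^ 2 - of_int j" by (rule Qf_eq[OF a])
  have q2: "Qf (real n * y) = (2 * of_int J + 1) * (real n * y) - of_int J ^ 2 - of_int J" by (rule Qf_eq[OF b])
  show ?thesis
  proof (cases "even j")
    case True
    have t: "tri y = y - of_int j" using tri_eq[OF a] True by simp
    define i where "i = J - int n * j"
    have c: "of_int i \<le> real n * tri y" "real n * tri y \<le> of_int i + 1"
      using b unfolding t i_def by (simp_all add: algebra_simps)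
    have q3: "Qf (real n * tri y) = (2 * of_int i + 1) * (real n * tri y) - of_int i ^ 2 - of_int i"
      by (rule Qf_eq[OF c])
    show ?thesis unfolding q1 q2 q3 unfolding t i_def
      by (simp add: algebra_simps power2_eq_square)
  next
    case False
    have t: "tri y = of_int j + 1 - y" using tri_eq[OF a] False by simp
    define i where "i = int n * (j + 1) - J - 1"
    have c: "of_int i \<le> real n * tri y" "real n * tri y \<le> of_int i + 1"
      using b unfolding t i_def by (simp_all add: algebra_simps)
    have q3: "Qf (real n * tri y) = (2 * of_int i + 1) * (real n * tri y) - of_int i ^ 2 - of_int i"
      by (rule Qf_eq[OF c])
    show ?thesis unfolding q1 q2 q3 unfolding t i_def
      by (simp add: algebra_simps power2_eq_square)
  qed
qed

lemma Qf_max: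
  fixes i :: int
  shows "(2 * of_int i + 1) * y - of_int i ^ 2 - of_int i \<le> Qf y"
proof -
  define j where "j = \<lfloor>y\<rfloor>"
  have a: "of_int j \<le> y" "y < of_int j + 1" unfolding j_def by linarith+
  have q: "Qf y = (2 * of_int j + 1) * y - of_int j ^ 2 - of_int j" by (rule Qf_eq) (use a in auto)
  show ?thesis
  proof (cases "i = j")
    case True then show ?thesis unfolding q by simp
  next
    case ne: False
    have "(y - of_int j) * (y - of_int j - 1) \<le> 0"
      using a by (intro mult_nonneg_nonpos) auto
    moreover have "0 \<le> (y - of_int i) * (y - of_int i - 1)"
    proof (cases "i < j")
      case True
      then have "of_int i + 1 \<le> (of_int j :: real)" by linarith
      then show ?thesis using a by (intro mult_nonneg_nonneg) auto
    next
      case False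
      then have "of_int j + 1 \<le> (of_int i :: real)" using ne by linarith
      then show ?thesis using a by (intro mult_nonpos_nonpos) auto
    qed
    ultimately show ?thesis unfolding q by (simp add: algebra_simps power2_eq_square)
  qed
qed

lemma Qf_bounds: "y ^ 2 \<le> Qf y" "Qf y \<le> y ^ 2 + 1 / 4"
proof -
  define j where "j = \<lfloor>y\<rfloor>"
  have a: "of_int j \<le> y" "y < of_int j + 1" unfolding j_def by linarith+
  have q: "Qf y = y ^ 2 + (y - of_int j) * (of_int j + 1 - y)"
    by (subst Qf_eq[of j]) (use a in \<open>auto simp: algebra_simps power2_eq_square\<close>)
  have "0 \<le> (y - of_int j) * (of_int j + 1 - y)" using a by auto
  then show "y ^ 2 \<le> Qf y" unfolding q by simp
  have "(y - of_int j) * (of_int j + 1 - y) \<le> 1 / 4"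
  proof -
    have "0 \<le> (y - of_int j - 1 / 2) ^ 2" by simp
    then show ?thesis by (simp add: algebra_simps power2_eq_square)
  qed
  then show "Qf y \<le> y ^ 2 + 1 / 4" unfolding q by simp
qed

lemma Qf_lip:
  assumes "0 \<le> y'" "y' \<le> y" "y \<le> N"
  shows "0 \<le> Qf y - Qf y'" "Qf y - Qf y' \<le> (2 * N + 1) * (y - y')"
proof -
  define j where "j = \<lfloor>y\<rfloor>"
  define j' where "j' = \<lfloor>y'\<rfloor>"
  have a: "of_int j \<le> y" "y \<le> of_int j + 1" unfolding j_def by linarith+
  have a': "of_int j' \<le> y'" "y' \<le> of_int j' + 1" unfolding j'_def by linarith+
  have "j' \<ge> 0" using assms(1) unfolding j'_def by simp
  have m1: "(2 * of_int j' + 1) * y - of_int j' ^ 2 - of_int j' \<le> Qf y" by (rule Qf_max)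
  have e1: "Qf y' = (2 * of_int j' + 1) * y' - of_int j' ^ 2 - of_int j'" by (rule Qf_eq[OF a'])
  have d1: "(2 * of_int j' + 1) * (y - y') = (2 * of_int j' + 1) * y - (2 * of_int j' + 1) * y'"
    by (simp add: right_diff_distrib)
  have n1: "0 \<le> (2 * of_int j' + 1) * (y - y')"
    using \<open>j' \<ge> 0\<close> assms by (intro mult_nonneg_nonneg) auto
  show "0 \<le> Qf y - Qf y'" using m1 e1 d1 n1 by linarith
  have m2: "(2 * of_int j + 1) * y' - of_int j ^ 2 - of_int j \<le> Qf y'" by (rule Qf_max)
  have e2: "Qf y = (2 * of_int j + 1) * y - of_int j ^ 2 - of_int j" by (rule Qf_eq[OF a])
  have d2: "(2 * of_int j + 1) * (y - y') = (2 * of_int j + 1) * y - (2 * of_int j + 1) * y'"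
    by (simp add: right_diff_distrib)
  have "2 * of_int j + 1 \<le> 2 * N + 1" using a assms by linarith
  then have n2: "(2 * of_int j + 1) * (y - y') \<le> (2 * N + 1) * (y - y')"
    using assms by (intro mult_right_mono) auto
  show "Qf y - Qf y' \<le> (2 * N + 1) * (y - y')" using m2 e2 d2 n2 by linarith
qed

lemma Qf_le_chord:
  assumes "0 \<le> y" "y \<le> real N"
  shows "Qf y \<le> real N * y"
proof -
  define j where "j = \<lfloor>y\<rfloor>"
  have a: "of_int j \<le> y" "y \<le> of_int j + 1" unfolding j_def by linarith+
  have q: "Qf y = (2 * of_int j + 1) * y - of_int j ^ 2 - of_int j" by (rule Qf_eq[OF a])
  have "j \<ge> 0" using assms unfolding j_def by simp
  show ?thesis
  proof (cases "2 * of_int j + 1 \<le> real N")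
    case True
    then have "(2 * of_int j + 1) * y \<le> real N * y" using assms by (intro mult_right_mono) auto
    moreover have "0 \<le> of_int j ^ 2 + (of_int j :: real)" using \<open>j \<ge> 0\<close> by simp
    ultimately show ?thesis unfolding q by linarith
  next
    case False
    have h1: "(2 * of_int j + 1 - real N) * y \<le> (2 * of_int j + 1 - real N) * real N"
      using False assms by (intro mult_left_mono) auto
    have "0 \<le> (int N - j) * (int N - j - 1)"
    proof (cases "int N - j \<le> 0")
      case True then show ?thesis by (intro mult_nonpos_nonpos) auto
    next
      case False then show ?thesis by (intro mult_nonneg_nonneg) auto
    qed
    then have h2: "0 \<le> (real N - of_int j) * (real N - of_int j - 1)"
    proof -
      have "(real N - of_int j) * (real N - of_int j - 1) = of_int ((int N - j) * (int N - j - 1))"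
        by simp
      then show ?thesis using of_int_nonneg[OF \<open>0 \<le> (int N - j) * (int N - j - 1)\<close>]
        by (simp only:)
    qed
    have e: "real N * y - ((2 * of_int j + 1) * y - of_int j ^ 2 - of_int j)
       = (real N - of_int j) * (real N - of_int j - 1) + ((2 * of_int j + 1 - real N) * real N - (2 * of_int j + 1 - real N) * y)"
      by (simp add: algebra_simps power2_eq_square)
    show ?thesis unfolding q using e h1 h2 by linarith
  qed
qed

lemma relu_sum:
  fixes c :: "nat \<Rightarrow> real"
  assumes "i < n" "real i \<le> y" "y \<le> real i + 1"
  shows "(\<Sum>j<n. c j * relu (y - real j)) = (\<Sum>j\<le>i. c j * (y - real j))"
proof -
  have "(\<Sum>j<n. c j * relu (y - real j)) = (\<Sum>j<n. if j \<le> i then c j * (y - real j) else 0)"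
  proof (rule sum.cong)
    fix j assume "j \<in> {..<n}"
    show "c j * relu (y - real j) = (if j \<le> i then c j * (y - real j) else 0)"
    proof (cases "j \<le> i")
      case True
      then have "real j \<le> y" using assms by linarith
      then show ?thesis using True by (simp add: relu_def)
    next
      case False
      then have "y \<le> real j" using assms by linarith
      then show ?thesis using False by (simp add: relu_def)
    qed
  qed simp
  also have "\<dots> = (\<Sum>j\<in>{..<n} \<inter> {j. j \<le> i}. c j * (y - real j))"
    by (simp add: sum.If_cases)
  also have "{..<n} \<inter> {j. j \<le> i} = {..i}" using assms(1) by auto
  finally show ?thesis .
qed

definition tau :: "nat \<Rightarrow> real" where "tau j = (if j = 0 then 1 else 2 * (-1) ^ j)"
definition kap :: "nat \<Rightarrow> real" where "kap j = (if j = 0 then 1 else 2)"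

lemma tau_closed: "(\<Sum>j\<le>i. tau j * (y - real j)) = (if even i then y - real i else real i + 1 - y)"
  by (induction i) (auto simp: tau_def algebra_simps)

lemma kap_closed: "(\<Sum>j\<le>i. kap j * (y - real j)) = (2 * real i + 1) * y - real i ^ 2 - real i"
  by (induction i) (auto simp: kap_def algebra_simps power2_eq_square)

definition Tn :: "nat \<Rightarrow> real \<Rightarrow> real" where
  "Tn n s = (\<Sum>j<n. tau j * relu (real n * s - real j))"
definition Qn :: "nat \<Rightarrow> real \<Rightarrow> real" where
  "Qn n s = (\<Sum>j<n. kap j * relu (real n * s - real j))"

lemma exists_cell:
  assumes "1 \<le> n" "0 \<le> y" "y \<le> real n"
  shows "\<exists>i<n. real i \<le> y \<and> y \<le> real i + 1"
proof (cases "y < real n")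
  case True
  define i where "i = nat \<lfloor>y\<rfloor>"
  have "real i = of_int \<lfloor>y\<rfloor>" unfolding i_def using assms by simp
  then have "real i \<le> y" "y \<le> real i + 1" by linarith+
  moreover have "i < n" using True \<open>real i \<le> y\<close> by linarith
  ultimately show ?thesis by blast
next
  case False
  then have "y = real n" using assms by simp
  then show ?thesis using assms by (intro exI[of _ "n - 1"]) (auto simp: of_nat_diff)
qed

lemma Tn_eq:
  assumes "1 \<le> n" "0 \<le> s" "s \<le> 1"
  shows "Tn n s = tri (real n * s)"
proof -
  have "0 \<le> real n * s" "real n * s \<le> real n" using assms by (auto simp: mult_left_le)
  then obtain i where i: "i < n" "real i \<le> real n * s" "real n * s \<le> real i + 1"
    using exists_cell assms(1) by blast
  have a: "of_int (int i) \<le> real n * s" "real n * s \<le> of_int (int i) + 1" using i by simp_all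
  show ?thesis unfolding Tn_def relu_sum[OF i] tau_closed tri_eq[OF a] by simp
qed

lemma Qn_eq:
  assumes "1 \<le> n" "0 \<le> s" "s \<le> 1"
  shows "Qn n s = Qf (real n * s)"
proof -
  have "0 \<le> real n * s" "real n * s \<le> real n" using assms by (auto simp: mult_left_le)
  then obtain i where i: "i < n" "real i \<le> real n * s" "real n * s \<le> real i + 1"
    using exists_cell assms(1) by blast
  have a: "of_int (int i) \<le> real n * s" "real n * s \<le> of_int (int i) + 1" using i by simp_all
  show ?thesis unfolding Qn_def relu_sum[OF i] kap_closed Qf_eq[OF a] by simp
qed



definition step :: "nat \<Rightarrow> nat \<Rightarrow> (nat \<Rightarrow> real) \<Rightarrow> (nat \<Rightarrow> real)" where
  "step n N z = (\<lambda>i. if i = 0 then Tn n (z 0)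
     else if i = 1 then relu (z 1) - (relu (real n * z 0) / real n - Qn n (z 0) / real n ^ 2) / real N ^ 2
     else 0)"

fun sq_unit :: "nat \<Rightarrow> nat \<Rightarrow> (nat \<Rightarrow> real) \<Rightarrow> (nat \<Rightarrow> real)" where
  "sq_unit n 0 z = z"
| "sq_unit n (Suc l) z = step n (n ^ l) (sq_unit n l z)"

lemma sum2: "(\<Sum>j<(2::nat). f j) = f 0 + (f 1 :: real)"
  by (simp add: numeral_2_eq_2)

lemma realizes_step:
  assumes "1 \<le> n"
  shows "realizes 2 (n + 1) 1 (step n N)"
proof (rule realizes_one)
  define A1 where "A1 = (\<lambda>(i::nat) (j::nat). if i < n then (if j = 0 then real n else 0)
      else if i = n then (if j = 1 then 1 else 0) else (0::real))"
  define b1 where "b1 = (\<lambda>i. if i < n then - real i else (0::real))"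
  define A2 where "A2 = (\<lambda>(i::nat) (j::nat). if i = 0 then (if j < n then tau j else 0)
      else if i = 1 then (if j < n then (kap j / real n ^ 2 - (if j = 0 then 1 / real n else 0)) / real N ^ 2
        else if j = n then 1 else 0) else (0::real))"
  fix z :: "nat \<Rightarrow> real"
  define h where "h = (\<lambda>i. relu (affine_map A1 b1 2 z i))"
  have h: "h j = relu (real n * z 0 - real j)" if "j < n" for j
    using that unfolding h_def affine_map_def sum2 A1_def b1_def by simp
  have hn: "h n = relu (z 1)"
    unfolding h_def affine_map_def sum2 A1_def b1_def by simp
  have r0: "affine_map A2 (\<lambda>_. 0) (n + 1) h 0 = Tn n (z 0)"
    unfolding affine_map_def Tn_def using h by (simp add: A2_def)
  have r1: "affine_map A2 (\<lambda>_. 0) (n + 1) h 1 =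
     relu (z 1) - (relu (real n * z 0) / real n - Qn n (z 0) / real n ^ 2) / real N ^ 2"
  proof -
    have "affine_map A2 (\<lambda>_. 0) (n + 1) h 1 =
       (\<Sum>j<n. (kap j / real n ^ 2 - (if j = 0 then 1 / real n else 0)) / real N ^ 2 * relu (real n * z 0 - real j))
       + relu (z 1)"
      unfolding affine_map_def using h hn by (simp add: A2_def)
    also have "(\<Sum>j<n. (kap j / real n ^ 2 - (if j = 0 then 1 / real n else 0)) / real N ^ 2 * relu (real n * z 0 - real j))
      = ((\<Sum>j<n. kap j * relu (real n * z 0 - real j)) / real n ^ 2
         - (\<Sum>j<n. (if j = 0 then relu (real n * z 0 - real j) / real n else 0))) / real N ^ 2"
    proof -
      have "(kap j / real n ^ 2 - (if j = 0 then 1 / real n else 0)) / real N ^ 2 * relu (real n * z 0 - real j)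
          = kap j * relu (real n * z 0 - real j) / real n ^ 2 / real N ^ 2
            - (if j = 0 then relu (real n * z 0 - real j) / real n else 0) / real N ^ 2" for j
        by (cases "j = 0") (simp_all add: diff_divide_distrib left_diff_distrib)
      then show ?thesis
        by (simp add: sum_subtractf sum_divide_distrib[symmetric] diff_divide_distrib)
    qed
    also have "(\<Sum>j<n. (if j = 0 then relu (real n * z 0 - real j) / real n else 0)) = relu (real n * z 0) / real n"
      using assms by (simp add: sum.delta)
    finally show ?thesis unfolding Qn_def by (simp add: diff_divide_distrib)
  qed
  show "step n N z = affine_map A2 (\<lambda>_. 0) (n + 1) (\<lambda>i. relu (affine_map A1 b1 2 z i))"
  proof
    fix i
    show "step n N z i = affine_map A2 (\<lambda>_. 0) (n + 1) (\<lambda>i. relu (affine_map A1 b1 2 z i)) i"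
    proof (cases "i = 0")
      case True then show ?thesis using r0 unfolding h_def step_def by simp
    next
      case False
      show ?thesis
      proof (cases "i = 1")
        case True then show ?thesis using r1 unfolding h_def step_def by simp
      next
        case False
        then show ?thesis using \<open>i \<noteq> 0\<close> unfolding step_def affine_map_def A2_def by simp
      qed
    qed
  qed
qed simp

lemma realizes_sq_unit:
  assumes "1 \<le> n"
  shows "realizes 2 (n + 1) (Suc l) (sq_unit n (Suc l))"
proof (induction l)
  case 0
  have r: "realizes 2 (n + 1) (Suc 0) (step n 1)" using realizes_step[OF assms, of 1] by simp
  show ?case by (rule realizes_cong[OF r]) simp
next
  case (Suc l)
  have "realizes 2 (max (n + 1) (n + 1)) (Suc l + 1) (\<lambda>x. step n (n ^ Suc l) (sq_unit n (Suc l) x))"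
    by (rule realizes_comp[OF Suc realizes_step[OF assms]]) simp
  then show ?case by simp
qed

lemma sq_unit_val:
  assumes "1 \<le> n" "0 \<le> w" "w \<le> 1" "z 0 = w" "z 1 = w"
  shows "sq_unit n l z 0 = tri (real n ^ l * w) \<and> sq_unit n l z 1 = Qf (real n ^ l * w) / (real n ^ l) ^ 2"
proof (induction l)
  case 0
  have a: "of_int 0 \<le> w" "w \<le> of_int 0 + 1" using assms by auto
  show ?case using assms tri_eq[OF a] Qf_eq[OF a] by simp
next
  case (Suc l)
  define y where "y = real n ^ l * w"
  define s where "s = tri y"
  have s: "0 \<le> s" "s \<le> 1" unfolding s_def by (rule tri_range)+
  have IH: "sq_unit n l z 0 = s" "sq_unit n l z 1 = Qf y / (real n ^ l) ^ 2"
    using Suc unfolding s_def y_def by auto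
  have np: "real n > 0" using assms by simp
  have y0: "0 \<le> Qf y" using Qf_bounds(1)[of y] by (meson order.trans zero_le_power2)
  have c0: "Tn n s = tri (real n ^ Suc l * w)"
    using Tn_eq[OF assms(1) s] tri_comp[of n y] unfolding s_def y_def by (simp add: mult.assoc)
  have rq: "relu (Qf y / (real n ^ l) ^ 2) = Qf y / (real n ^ l) ^ 2" using y0 by (simp add: relu_def)
  have rs: "relu (real n * s) = real n * s" using s np by (simp add: relu_def)
  have key: "Qf (real n * y) = real n ^ 2 * Qf y - real n ^ 2 * s + Qf (real n * s)"
    using Qf_key[of n y] unfolding s_def by linarith
  have c1: "Qf y / (real n ^ l) ^ 2 - (real n * s / real n - Qf (real n * s) / real n ^ 2) / (real n ^ l) ^ 2
     = Qf (real n ^ Suc l * w) / (real n ^ Suc l) ^ 2"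
  proof -
    have e: "real n ^ Suc l * w = real n * y" unfolding y_def by (simp add: mult.assoc)
    show ?thesis unfolding e key using np
      by (simp add: field_simps power2_eq_square)
  qed
  show ?case using c0 c1 IH rq rs Qn_eq[OF assms(1) s]
    by (simp add: step_def)
qed



definition S :: "nat \<Rightarrow> real \<Rightarrow> real" where "S N w = Qf (real N * w) / real N ^ 2"
definition Sq :: "nat \<Rightarrow> real \<Rightarrow> real" where "Sq N t = 4 * S N ((t + 1) / 2) - 2 * t - 1"
definition Mf :: "nat \<Rightarrow> real \<Rightarrow> real \<Rightarrow> real" where "Mf N a b = Sq N ((a + b) / 2) - Sq N ((a - b) / 2)"

lemma S_bounds:
  assumes "1 \<le> N" "0 \<le> w" "w \<le> 1"
  shows "w ^ 2 \<le> S N w" "S N w \<le> w ^ 2 + 1 / (4 * real N ^ 2)" "S N w \<le> w"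
proof -
  have Np: "real N > 0" using assms by simp
  have b1: "(real N * w) ^ 2 \<le> Qf (real N * w)" by (rule Qf_bounds(1))
  have b2: "Qf (real N * w) \<le> (real N * w) ^ 2 + 1 / 4" by (rule Qf_bounds(2))
  have b3: "Qf (real N * w) \<le> real N * (real N * w)"
    by (rule Qf_le_chord) (use assms in \<open>auto simp: mult_left_le\<close>)
  show "w ^ 2 \<le> S N w" unfolding S_def using b1 Np by (simp add: field_simps power_mult_distrib)
  show "S N w \<le> w ^ 2 + 1 / (4 * real N ^ 2)" unfolding S_def using b2 Np
    by (simp add: field_simps power_mult_distrib)
  show "S N w \<le> w" unfolding S_def using b3 Np by (simp add: field_simps power2_eq_square)
qed

lemma S_lip:
  assumes "1 \<le> N" "0 \<le> w'" "w' \<le> w" "w \<le> 1"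
  shows "0 \<le> S N w - S N w'" "S N w - S N w' \<le> 3 * (w - w')"
proof -
  have Np: "real N > 0" using assms by simp
  have y: "0 \<le> real N * w'" "real N * w' \<le> real N * w" "real N * w \<le> real N"
    using assms by (auto simp: mult_left_mono mult_left_le)
  have l1: "0 \<le> Qf (real N * w) - Qf (real N * w')" by (rule Qf_lip(1)[OF y])
  have l2: "Qf (real N * w) - Qf (real N * w') \<le> (2 * real N + 1) * (real N * w - real N * w')"
    by (rule Qf_lip(2)[OF y])
  have e: "S N w - S N w' = (Qf (real N * w) - Qf (real N * w')) / real N ^ 2"
    unfolding S_def by (simp add: diff_divide_distrib)
  show "0 \<le> S N w - S N w'" unfolding e using l1 by simp
  have "(2 * real N + 1) * (real N * w - real N * w') = ((2 * real N + 1) * real N) * (w - w')"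
    by (simp add: algebra_simps)
  also have "\<dots> \<le> (3 * real N ^ 2) * (w - w')"
    using assms by (intro mult_right_mono) (auto simp: power2_eq_square algebra_simps)
  also have "\<dots> = 3 * (w - w') * real N ^ 2" by simp
  finally have f: "Qf (real N * w) - Qf (real N * w') \<le> 3 * (w - w') * real N ^ 2" using l2 by linarith
  have "(Qf (real N * w) - Qf (real N * w')) / real N ^ 2 \<le> 3 * (w - w') * real N ^ 2 / real N ^ 2"
    by (rule divide_right_mono[OF f]) simp
  also have "3 * (w - w') * real N ^ 2 / real N ^ 2 = 3 * (w - w')" using Np by simp
  finally show "S N w - S N w' \<le> 3 * (w - w')" unfolding e .
qed

lemma Sq_props:
  assumes "1 \<le> N" "-1 \<le> t" "t \<le> 1"
  shows "0 \<le> Sq N t" "Sq N t \<le> 1" "\<bar>Sq N t - t ^ 2\<bar> \<le> 1 / real N ^ 2"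
proof -
  define w where "w = (t + 1) / 2"
  have w: "0 \<le> w" "w \<le> 1" using assms unfolding w_def by auto
  have sq: "Sq N t = 4 * S N w - 4 * w + 1" unfolding Sq_def w_def by (simp add: algebra_simps)
  have t2: "t ^ 2 = 4 * w ^ 2 - 4 * w + 1" unfolding w_def by (simp add: power2_eq_square field_simps)
  note b = S_bounds[OF assms(1) w]
  have "0 \<le> (2 * w - 1) ^ 2" by simp
  then show "0 \<le> Sq N t" unfolding sq using b(1) by (simp add: power2_eq_square algebra_simps)
  show "Sq N t \<le> 1" unfolding sq using b(3) by simp
  have "Sq N t - t ^ 2 = 4 * (S N w - w ^ 2)" unfolding sq t2 by simp
  moreover have "4 * (S N w - w ^ 2) \<le> 1 / real N ^ 2" using b(2) by simp
  moreover have "0 \<le> 4 * (S N w - w ^ 2)" using b(1) by simp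
  ultimately show "\<bar>Sq N t - t ^ 2\<bar> \<le> 1 / real N ^ 2" by simp
qed

lemma Sq_lip_aux:
  assumes "1 \<le> N" "-1 \<le> t'" "t' \<le> t" "t \<le> 1"
  shows "\<bar>Sq N t - Sq N t'\<bar> \<le> 4 * \<bar>t - t'\<bar>"
proof -
  have w: "0 \<le> (t' + 1) / 2" "(t' + 1) / 2 \<le> (t + 1) / 2" "(t + 1) / 2 \<le> 1" using assms by auto
  note l = S_lip[OF assms(1) w]
  have e: "Sq N t - Sq N t' = 4 * (S N ((t + 1) / 2) - S N ((t' + 1) / 2)) - 2 * (t - t')"
    unfolding Sq_def by (simp add: algebra_simps)
  define D where "D = S N ((t + 1) / 2) - S N ((t' + 1) / 2)"
  have h: "3 * ((t + 1) / 2 - (t' + 1) / 2) = 3 * ((t - t') / 2)" by (simp add: field_simps)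
  have D: "0 \<le> D" "D \<le> 3 * ((t - t') / 2)" using l h unfolding D_def by linarith+
  have e2: "Sq N t - Sq N t' = 4 * D - 2 * (t - t')" unfolding e D_def by simp
  have "\<bar>t - t'\<bar> = t - t'" using assms by simp
  then show ?thesis unfolding e2 using D by (simp add: abs_le_iff)
qed

lemma Sq_lip:
  assumes "1 \<le> N" "-1 \<le> t" "t \<le> 1" "-1 \<le> t'" "t' \<le> 1"
  shows "\<bar>Sq N t - Sq N t'\<bar> \<le> 4 * \<bar>t - t'\<bar>"
proof (cases "t' \<le> t")
  case True then show ?thesis using Sq_lip_aux assms by simp
next
  case False
  then have "\<bar>Sq N t' - Sq N t\<bar> \<le> 4 * \<bar>t' - t\<bar>" using Sq_lip_aux assms by simp
  then show ?thesis by (simp add: abs_minus_commute)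
qed

lemma Mf_props:
  assumes "1 \<le> N" "\<bar>a\<bar> \<le> 1" "\<bar>b\<bar> \<le> 1"
  shows "\<bar>Mf N a b\<bar> \<le> 1" "\<bar>Mf N a b - a * b\<bar> \<le> 2 / real N ^ 2"
proof -
  have u: "-1 \<le> (a + b) / 2" "(a + b) / 2 \<le> 1" using assms by (auto simp: abs_le_iff)
  have v: "-1 \<le> (a - b) / 2" "(a - b) / 2 \<le> 1" using assms by (auto simp: abs_le_iff)
  note pu = Sq_props[OF assms(1) u] and pv = Sq_props[OF assms(1) v]
  show "\<bar>Mf N a b\<bar> \<le> 1" unfolding Mf_def using pu pv by (simp add: abs_le_iff)
  have ab: "a * b = ((a + b) / 2) ^ 2 - ((a - b) / 2) ^ 2" by (simp add: power2_eq_square field_simps)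
  have eq: "Mf N a b - a * b = (Sq N ((a + b) / 2) - ((a + b) / 2) ^ 2) - (Sq N ((a - b) / 2) - ((a - b) / 2) ^ 2)"
    unfolding Mf_def ab by simp
  have "\<bar>Mf N a b - a * b\<bar> \<le> \<bar>Sq N ((a + b) / 2) - ((a + b) / 2) ^ 2\<bar> + \<bar>Sq N ((a - b) / 2) - ((a - b) / 2) ^ 2\<bar>"
    unfolding eq by (rule abs_triangle_ineq4)
  then show "\<bar>Mf N a b - a * b\<bar> \<le> 2 / real N ^ 2" using pu(3) pv(3) by simp
qed

lemma Mf_lip:
  assumes "1 \<le> N" "\<bar>a\<bar> \<le> 1" "\<bar>b\<bar> \<le> 1" "\<bar>a'\<bar> \<le> 1" "\<bar>b'\<bar> \<le> 1"
  shows "\<bar>Mf N a b - Mf N a' b'\<bar> \<le> 4 * (\<bar>a - a'\<bar> + \<bar>b - b'\<bar>)"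
proof -
  have u: "-1 \<le> (a + b) / 2" "(a + b) / 2 \<le> 1" "-1 \<le> (a' + b') / 2" "(a' + b') / 2 \<le> 1"
    using assms by (auto simp: abs_le_iff)
  have v: "-1 \<le> (a - b) / 2" "(a - b) / 2 \<le> 1" "-1 \<le> (a' - b') / 2" "(a' - b') / 2 \<le> 1"
    using assms by (auto simp: abs_le_iff)
  have lu: "\<bar>Sq N ((a + b) / 2) - Sq N ((a' + b') / 2)\<bar> \<le> 4 * \<bar>(a + b) / 2 - (a' + b') / 2\<bar>"
    by (rule Sq_lip[OF assms(1) u])
  have lv: "\<bar>Sq N ((a - b) / 2) - Sq N ((a' - b') / 2)\<bar> \<le> 4 * \<bar>(a - b) / 2 - (a' - b') / 2\<bar>"
    by (rule Sq_lip[OF assms(1) v])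
  have e1: "(a + b) / 2 - (a' + b') / 2 = ((a - a') + (b - b')) / 2" by (simp add: field_simps)
  have e2: "(a - b) / 2 - (a' - b') / 2 = ((a - a') - (b - b')) / 2" by (simp add: field_simps)
  have "\<bar>(a + b) / 2 - (a' + b') / 2\<bar> \<le> (\<bar>a - a'\<bar> + \<bar>b - b'\<bar>) / 2"
    unfolding e1 using abs_triangle_ineq[of "a - a'" "b - b'"] by simp
  moreover have "\<bar>(a - b) / 2 - (a' - b') / 2\<bar> \<le> (\<bar>a - a'\<bar> + \<bar>b - b'\<bar>) / 2"
    unfolding e2 using abs_triangle_ineq4[of "a - a'" "b - b'"] by simp
  ultimately show ?thesis using lu lv unfolding Mf_def by (simp add: abs_le_iff)
qed



lemma sum_delta_mult:
  fixes h :: "nat \<Rightarrow> real"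
  assumes "c < K"
  shows "(\<Sum>m<K. (if m = c then a else 0) * h m) = a * h c"
proof -
  have "(\<Sum>m<K. (if m = c then a else 0) * h m) = (\<Sum>m<K. if m = c then a * h m else 0)"
    by (rule sum.cong) auto
  also have "\<dots> = a * h c" using assms by (simp add: sum.delta)
  finally show ?thesis .
qed

definition Cr :: "nat \<Rightarrow> (nat \<Rightarrow> real) \<Rightarrow> (nat \<Rightarrow> real)" where
  "Cr K z = (\<lambda>i. if i < K then max (z i) (-1) else 0)"

lemma realizes_Cr1: "realizes K K 1 (Cr K)"
proof (rule realizes_one)
  define A where "A = (\<lambda>(i::nat) (j::nat). if i < K \<and> j = i then 1 else (0::real))"
  define b1 where "b1 = (\<lambda>i::nat. if i < K then 1 else (0::real))"
  define b2 where "b2 = (\<lambda>i::nat. if i < K then -1 else (0::real))"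
  fix z :: "nat \<Rightarrow> real"
  show "Cr K z = affine_map A b2 K (\<lambda>i. relu (affine_map A b1 K z i))"
  proof
    fix i
    show "Cr K z i = affine_map A b2 K (\<lambda>i. relu (affine_map A b1 K z i)) i"
    proof (cases "i < K")
      case True
      have a: "A i = (\<lambda>j. if j = i then 1 else 0)" using True unfolding A_def by auto
      have aff: "affine_map A b1 K z i = z i + 1"
        unfolding affine_map_def a b1_def using sum_delta_mult[OF True, of 1 z] True by simp
      define h where "h = (\<lambda>i. relu (affine_map A b1 K z i))"
      have "affine_map A b2 K h i = h i - 1"
        unfolding affine_map_def a b2_def using sum_delta_mult[OF True, of 1 h] True by simp
      also have "\<dots> = max (z i) (-1)" unfolding h_def aff relu_def by (simp add: max_def)
      finally show ?thesis unfolding Cr_def h_def using True by simp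
    next
      case False
      then show ?thesis unfolding Cr_def affine_map_def A_def b2_def by simp
    qed
  qed
qed simp

lemma realizes_Cr: "realizes K K (Suc l) (Cr K)"
proof (induction l)
  case 0 then show ?case using realizes_Cr1 by simp
next
  case (Suc l)
  have "realizes K (max K K) (Suc l + 1) (\<lambda>x. Cr K (Cr K x))"
    by (rule realizes_comp[OF Suc realizes_Cr1]) simp
  moreover have "Cr K (Cr K x) = Cr K x" for x by (auto simp: Cr_def)
  ultimately show ?case by simp
qed

definition Mu :: "nat \<Rightarrow> real \<Rightarrow> nat \<Rightarrow> nat \<Rightarrow> real" where
  "Mu j sg = (\<lambda>i m. if i < 2 then (if m = 0 then 1 / 4 else 0) + (if m = j + 1 then sg / 4 else 0) else 0)"
definition cu :: "nat \<Rightarrow> real" where "cu = (\<lambda>i. if i < 2 then 1 / 2 else 0)"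
definition Oj :: "nat \<Rightarrow> nat \<Rightarrow> nat \<Rightarrow> nat \<Rightarrow> real" where
  "Oj k j = (\<lambda>i m. if i = 0 then (if m = 1 then 4 else 0) + (if m = 3 then -4 else 0) + (if m = j + 5 then -2 else 0)
     else if i \<le> k then (if m = i + 4 then 1 else 0) else 0)"

definition Hb :: "nat \<Rightarrow> nat \<Rightarrow> nat \<Rightarrow> nat \<Rightarrow> (nat \<Rightarrow> real) \<Rightarrow> (nat \<Rightarrow> real)" where
  "Hb n L k j z = cat 2 (sq_unit n L (affine_map (Mu j 1) cu (k + 1) z))
     (cat 2 (sq_unit n L (affine_map (Mu j (-1)) cu (k + 1) z)) (Cr (k + 1) z))"

definition Blk :: "nat \<Rightarrow> nat \<Rightarrow> nat \<Rightarrow> nat \<Rightarrow> (nat \<Rightarrow> real) \<Rightarrow> (nat \<Rightarrow> real)" where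
  "Blk n L k j z = affine_map (Oj k j) (\<lambda>_. 0) (k + 5) (Hb n L k j z)"

lemma realizes_Blk:
  assumes "1 \<le> n" "1 \<le> L"
  shows "realizes (k + 1) ((n + 1) + ((n + 1) + (k + 1))) L (Blk n L k j)"
proof -
  obtain L' where L: "L = Suc L'" using assms(2) by (cases L) auto
  have u: "realizes (k + 1) (n + 1) L (\<lambda>z. sq_unit n L (affine_map (Mu j sg) cu (k + 1) z))" for sg
    using realizes_comp[OF realizes_affine[of "k + 1" "n + 1" "Mu j sg" cu] realizes_sq_unit[OF assms(1), of L']]
    unfolding L by simp
  have c: "realizes (k + 1) (k + 1) L (Cr (k + 1))" unfolding L by (rule realizes_Cr)
  have "realizes (k + 1) ((n + 1) + ((n + 1) + (k + 1))) L (Hb n L k j)"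
    unfolding Hb_def by (intro realizes_par u c)
  then show ?thesis unfolding Blk_def by (rule realizes_post)
qed

lemma Blk_val:
  assumes n: "1 \<le> n" and "1 \<le> j" "j < k"
    and z0: "\<bar>z 0\<bar> \<le> 1" and zi: "\<And>i. 1 \<le> i \<Longrightarrow> i \<le> k \<Longrightarrow> \<bar>z i\<bar> \<le> 1"
  shows "Blk n L k j z 0 = Mf (n ^ L) (z 0) (z (j + 1))"
    and "\<And>i. 1 \<le> i \<Longrightarrow> i \<le> k \<Longrightarrow> Blk n L k j z i = z i"
proof -
  have zj: "\<bar>z (j + 1)\<bar> \<le> 1" using zi assms by simp
  have jk: "j + 1 < k + 1" using assms by simp
  have P: "affine_map (Mu j sg) cu (k + 1) z i = ((z 0 + sg * z (j + 1)) / 2 + 1) / 2" if "i < 2" for sg i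
  proof -
    have "affine_map (Mu j sg) cu (k + 1) z i
       = (\<Sum>m<k + 1. (if m = 0 then 1 / 4 else 0) * z m) + (\<Sum>m<k + 1. (if m = j + 1 then sg / 4 else 0) * z m) + 1 / 2"
      unfolding affine_map_def Mu_def cu_def using that by (simp add: distrib_right sum.distrib)
    also have "\<dots> = 1 / 4 * z 0 + sg / 4 * z (j + 1) + 1 / 2"
      using sum_delta_mult[of 0 "k + 1" "1 / 4" z] sum_delta_mult[OF jk, of "sg / 4" z] by simp
    finally show ?thesis by (simp add: field_simps)
  qed
  define N where "N = n ^ L"
  have UV: "sq_unit n L (affine_map (Mu j sg) cu (k + 1) z) 1 = S N (((z 0 + sg * z (j + 1)) / 2 + 1) / 2)"
    if "\<bar>sg\<bar> = 1" for sg
  proof -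
    have w: "0 \<le> ((z 0 + sg * z (j + 1)) / 2 + 1) / 2" "((z 0 + sg * z (j + 1)) / 2 + 1) / 2 \<le> 1"
    proof -
      have "\<bar>sg * z (j + 1)\<bar> \<le> 1" using zj that by (simp add: abs_mult)
      then have "-1 \<le> sg * z (j + 1)" "sg * z (j + 1) \<le> 1" "-1 \<le> z 0" "z 0 \<le> 1"
        using z0 by (auto simp: abs_le_iff)
      then show "0 \<le> ((z 0 + sg * z (j + 1)) / 2 + 1) / 2" by (simp add: field_simps)
      from \<open>-1 \<le> sg * z (j + 1)\<close> \<open>sg * z (j + 1) \<le> 1\<close> \<open>z 0 \<le> 1\<close>
      show "((z 0 + sg * z (j + 1)) / 2 + 1) / 2 \<le> 1" by (simp add: field_simps)
    qed
    show ?thesis using sq_unit_val[OF n w, of "affine_map (Mu j sg) cu (k + 1) z" L] P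
      unfolding S_def N_def by (simp add: of_nat_power)
  qed
  define H where "H = Hb n L k j z"
  have H1: "H 1 = S N (((z 0 + z (j + 1)) / 2 + 1) / 2)"
    using UV[of 1] unfolding H_def Hb_def cat_def by simp
  have H3: "H 3 = S N (((z 0 - z (j + 1)) / 2 + 1) / 2)"
    using UV[of "-1"] unfolding H_def Hb_def cat_def by simp
  have Hc: "H (i + 4) = Cr (k + 1) z i" for i
    unfolding H_def Hb_def cat_def by simp
  have Hj: "H (j + 5) = z (j + 1)"
    using Hc[of "j + 1"] zj assms unfolding Cr_def by (simp add: abs_le_iff add.commute)
  have "Blk n L k j z 0 = (\<Sum>m<k + 5. (if m = 1 then 4 else 0) * H m) + (\<Sum>m<k + 5. (if m = 3 then -4 else 0) * H m)
      + (\<Sum>m<k + 5. (if m = j + 5 then -2 else 0) * H m)"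
    unfolding Blk_def affine_map_def Oj_def H_def by (simp add: distrib_right sum.distrib)
  also have "\<dots> = 4 * H 1 - 4 * H 3 - 2 * H (j + 5)"
    using sum_delta_mult[of 1 "k + 5" 4 H] sum_delta_mult[of 3 "k + 5" "-4" H]
      sum_delta_mult[of "j + 5" "k + 5" "-2" H] assms by simp
  also have "\<dots> = Mf N (z 0) (z (j + 1))"
    unfolding H1 H3 Hj Mf_def Sq_def
  proof -
    have e1: "((z 0 + z (j + 1)) / 2 + 1) / 2 = (z 0 + z (j + 1)) / 2 / 2 + 1 / 2" by simp
    show "4 * S N (((z 0 + z (j + 1)) / 2 + 1) / 2) - 4 * S N (((z 0 - z (j + 1)) / 2 + 1) / 2) - 2 * z (j + 1) =
      4 * S N (((z 0 + z (j + 1)) / 2 + 1) / 2) - 2 * ((z 0 + z (j + 1)) / 2) - 1 -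
      (4 * S N (((z 0 - z (j + 1)) / 2 + 1) / 2) - 2 * ((z 0 - z (j + 1)) / 2) - 1)"
      by (simp add: field_simps)
  qed
  finally show "Blk n L k j z 0 = Mf (n ^ L) (z 0) (z (j + 1))" unfolding N_def .
  fix i assume i: "1 \<le> i" "i \<le> k"
  have "Blk n L k j z i = (\<Sum>m<k + 5. (if m = i + 4 then 1 else 0) * H m)"
    unfolding Blk_def affine_map_def Oj_def H_def using i by simp
  also have "\<dots> = H (i + 4)" using sum_delta_mult[of "i + 4" "k + 5" 1 H] i by simp
  also have "\<dots> = z i" using Hc[of i] zi[OF i] i unfolding Cr_def by (simp add: abs_le_iff)
  finally show "Blk n L k j z i = z i" .
qed



definition vlist :: "(nat \<Rightarrow> nat) \<Rightarrow> nat \<Rightarrow> nat list" where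
  "vlist \<alpha> d = concat (map (\<lambda>i. replicate (\<alpha> i) i) [0..<d])"

lemma vlist_len: "length (vlist \<alpha> d) = (\<Sum>i<d. \<alpha> i)"
  unfolding vlist_def by (induction d) auto

lemma vlist_set: "set (vlist \<alpha> d) \<subseteq> {..<d}"
  unfolding vlist_def by auto

lemma vlist_prod: "prod_list (map x (vlist \<alpha> d)) = (\<Prod>i<d. (x i :: real) ^ \<alpha> i)"
  unfolding vlist_def by (induction d) (auto simp: map_concat)

lemma vlist_sum: "sum_list (map g (vlist \<alpha> d)) = (\<Sum>i<d. real (\<alpha> i) * (g i :: real))"
  unfolding vlist_def by (induction d) (auto simp: map_concat sum_list_replicate)

lemma prod_nth: "(\<Prod>m<length xs. f (xs ! m)) = prod_list (map f xs :: real list)"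
  by (induction xs) (simp_all add: prod.lessThan_Suc_shift del: prod.lessThan_Suc)

lemma sum_nth: "(\<Sum>m<length xs. f (xs ! m)) = sum_list (map f xs :: real list)"
  by (induction xs) (simp_all add: sum.lessThan_Suc_shift del: sum.lessThan_Suc)

definition M0 :: "(nat \<Rightarrow> nat) \<Rightarrow> nat \<Rightarrow> nat \<Rightarrow> nat \<Rightarrow> real" where
  "M0 v k = (\<lambda>i m. if i = 0 then (if m = v 0 then 1 else 0)
     else if i \<le> k then (if m = v (i - 1) then 1 else 0) else 0)"

fun Gn :: "nat \<Rightarrow> nat \<Rightarrow> nat \<Rightarrow> nat \<Rightarrow> (nat \<Rightarrow> nat) \<Rightarrow> nat \<Rightarrow> (nat \<Rightarrow> real) \<Rightarrow> (nat \<Rightarrow> real)" where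
  "Gn n L k d v 0 x = affine_map (M0 v k) (\<lambda>_. 0) d x"
| "Gn n L k d v (Suc j) x = Blk n L k (Suc j) (Gn n L k d v j x)"

lemma realizes_Gn:
  assumes "1 \<le> n" "1 \<le> L"
  shows "realizes d ((n + 1) + ((n + 1) + (k + 1))) (j * L) (Gn n L k d v j)"
proof (induction j)
  case 0
  have "Gn n L k d v 0 = affine_map (M0 v k) (\<lambda>_. 0) d" by (rule ext) simp
  then show ?case using realizes_affine by simp
next
  case (Suc j)
  have "realizes d (max ((n + 1) + ((n + 1) + (k + 1))) ((n + 1) + ((n + 1) + (k + 1)))) (j * L + L)
      (\<lambda>x. Blk n L k (Suc j) (Gn n L k d v j x))"
    by (rule realizes_comp[OF Suc realizes_Blk[OF assms]]) (use assms in simp)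
  moreover have "(\<lambda>x. Blk n L k (Suc j) (Gn n L k d v j x)) = Gn n L k d v (Suc j)" by (rule ext) simp
  ultimately show ?case by (simp add: add.commute)
qed

lemma Gn_inv:
  assumes n: "1 \<le> n" and v: "\<And>m. m < k \<Longrightarrow> v m < d"
    and x: "\<And>i. i < d \<Longrightarrow> \<bar>x i\<bar> \<le> 1" and "j < k"
  shows "(\<forall>i. 1 \<le> i \<and> i \<le> k \<longrightarrow> Gn n L k d v j x i = x (v (i - 1))) \<and> \<bar>Gn n L k d v j x 0\<bar> \<le> 1 \<and>
    \<bar>Gn n L k d v j x 0 - (\<Prod>m\<le>j. x (v m))\<bar> \<le> real j * (2 / real (n ^ L) ^ 2)"
  using \<open>j < k\<close>
proof (induction j)
  case 0
  have "Gn n L k d v 0 x i = x (v (i - 1))" if "1 \<le> i" "i \<le> k" for i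
  proof -
    have vi: "v (i - 1) < d" using v that by simp
    have "Gn n L k d v 0 x i = (\<Sum>m<d. (if m = v (i - 1) then 1 else 0) * x m)"
      using that by (simp add: affine_map_def M0_def)
    then show ?thesis using sum_delta_mult[OF vi, of 1 x] by simp
  qed
  moreover have g0: "Gn n L k d v 0 x 0 = x (v 0)"
    using v[of 0] 0 by (simp add: affine_map_def M0_def sum_delta_mult[of "v 0" d 1 x])
  moreover have "\<bar>x (v 0)\<bar> \<le> 1" using x v[of 0] 0 by simp
  ultimately show ?case by simp
next
  case (Suc j)
  define z where "z = Gn n L k d v j x"
  have IH: "\<forall>i. 1 \<le> i \<and> i \<le> k \<longrightarrow> z i = x (v (i - 1))" "\<bar>z 0\<bar> \<le> 1"
    "\<bar>z 0 - (\<Prod>m\<le>j. x (v m))\<bar> \<le> real j * (2 / real (n ^ L) ^ 2)"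
    using Suc unfolding z_def by auto
  have zi: "\<bar>z i\<bar> \<le> 1" if "1 \<le> i" "i \<le> k" for i
    using IH(1) that x v[of "i - 1"] by simp
  note B = Blk_val[where j = "Suc j" and L = L and z = z and n = n and k = k, OF n _ Suc.prems IH(2) zi]
  have c: "z (Suc j + 1) = x (v (Suc j))" using IH(1) Suc.prems by simp
  have cb: "\<bar>x (v (Suc j))\<bar> \<le> 1" using x v Suc.prems by simp
  have N: "1 \<le> n ^ L" using n by simp
  have G: "Gn n L k d v (Suc j) x 0 = Mf (n ^ L) (z 0) (x (v (Suc j)))"
    using B(1) c unfolding z_def by simp
  have "\<forall>i. 1 \<le> i \<and> i \<le> k \<longrightarrow> Gn n L k d v (Suc j) x i = x (v (i - 1))"
    using B(2) IH(1) unfolding z_def by simp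
  moreover have "\<bar>Gn n L k d v (Suc j) x 0\<bar> \<le> 1" unfolding G by (rule Mf_props(1)[OF N IH(2) cb])
  moreover have "\<bar>Gn n L k d v (Suc j) x 0 - (\<Prod>m\<le>Suc j. x (v m))\<bar> \<le> real (Suc j) * (2 / real (n ^ L) ^ 2)"
  proof -
    define P where "P = (\<Prod>m\<le>j. x (v m))"
    define c where "c = x (v (Suc j))"
    have "\<bar>Mf (n ^ L) (z 0) c - P * c\<bar> \<le> \<bar>Mf (n ^ L) (z 0) c - z 0 * c\<bar> + \<bar>z 0 * c - P * c\<bar>"
      using abs_triangle_ineq[of "Mf (n ^ L) (z 0) c - z 0 * c" "z 0 * c - P * c"] by simp
    also have "\<bar>z 0 * c - P * c\<bar> = \<bar>z 0 - P\<bar> * \<bar>c\<bar>" by (simp add: abs_mult[symmetric] left_diff_distrib)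
    also have "\<dots> \<le> \<bar>z 0 - P\<bar>" using cb unfolding c_def by (simp add: mult_left_le)
    finally have "\<bar>Mf (n ^ L) (z 0) c - P * c\<bar> \<le> 2 / real (n ^ L) ^ 2 + real j * (2 / real (n ^ L) ^ 2)"
      using Mf_props(2)[OF N IH(2) cb] IH(3) unfolding P_def c_def by linarith
    moreover have "2 / real (n ^ L) ^ 2 + real j * (2 / real (n ^ L) ^ 2) = real (Suc j) * (2 / real (n ^ L) ^ 2)"
      by (simp only: of_nat_Suc distrib_right mult_1_left)
    ultimately have fin: "\<bar>Mf (n ^ L) (z 0) c - P * c\<bar> \<le> real (Suc j) * (2 / real (n ^ L) ^ 2)" by linarith
    have G': "Gn n L k d v (Suc j) x 0 = Mf (n ^ L) (z 0) c" using G unfolding c_def .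
    have prodS: "(\<Prod>m\<le>Suc j. x (v m)) = P * c" unfolding P_def c_def by simp
    show ?thesis unfolding G' prodS by (rule fin)
  qed
  ultimately show ?case by blast
qed

lemma Gn_lip:
  assumes n: "1 \<le> n" and v: "\<And>m. m < k \<Longrightarrow> v m < d"
    and x: "\<And>i. i < d \<Longrightarrow> \<bar>x i\<bar> \<le> 1" and y: "\<And>i. i < d \<Longrightarrow> \<bar>y i\<bar> \<le> 1" and "j < k"
  shows "\<bar>Gn n L k d v j x 0 - Gn n L k d v j y 0\<bar> \<le> 4 ^ j * (\<Sum>m\<le>j. \<bar>x (v m) - y (v m)\<bar>)"
  using \<open>j < k\<close>
proof (induction j)
  case 0
  have "Gn n L k d v 0 x 0 = x (v 0)" "Gn n L k d v 0 y 0 = y (v 0)"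
    using v[of 0] 0 by (simp_all add: affine_map_def M0_def sum_delta_mult[of "v 0" d 1])
  then show ?case by simp
next
  case (Suc j)
  have N: "1 \<le> n ^ L" using n by simp
  note ix = Gn_inv[OF n v x, where j = j and L = L] and iy = Gn_inv[OF n v y, where j = j and L = L]
  have bx: "\<bar>x (v (Suc j))\<bar> \<le> 1" and by': "\<bar>y (v (Suc j))\<bar> \<le> 1" using x y v Suc.prems by auto
  have Gx: "Gn n L k d v (Suc j) x 0 = Mf (n ^ L) (Gn n L k d v j x 0) (x (v (Suc j)))"
  proof -
    have zi: "\<bar>Gn n L k d v j x i\<bar> \<le> 1" if "1 \<le> i" "i \<le> k" for i
      using ix Suc.prems that x v[of "i - 1"] by simp
    show ?thesis using Blk_val(1)[where j = "Suc j" and L = L and z = "Gn n L k d v j x" and n = n and k = k, OF n _ Suc.prems _ zi] ix Suc.prems by simp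
  qed
  have Gy: "Gn n L k d v (Suc j) y 0 = Mf (n ^ L) (Gn n L k d v j y 0) (y (v (Suc j)))"
  proof -
    have zi: "\<bar>Gn n L k d v j y i\<bar> \<le> 1" if "1 \<le> i" "i \<le> k" for i
      using iy Suc.prems that y v[of "i - 1"] by simp
    show ?thesis using Blk_val(1)[where j = "Suc j" and L = L and z = "Gn n L k d v j y" and n = n and k = k, OF n _ Suc.prems _ zi] iy Suc.prems by simp
  qed
  define D where "D = (\<Sum>m\<le>j. \<bar>x (v m) - y (v m)\<bar>)"
  define e where "e = \<bar>x (v (Suc j)) - y (v (Suc j))\<bar>"
  have D0: "0 \<le> D" "0 \<le> e" unfolding D_def e_def by (auto intro: sum_nonneg)
  have "\<bar>Gn n L k d v (Suc j) x 0 - Gn n L k d v (Suc j) y 0\<bar>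
      \<le> 4 * (\<bar>Gn n L k d v j x 0 - Gn n L k d v j y 0\<bar> + e)"
    unfolding Gx Gy e_def using ix iy Suc.prems by (intro Mf_lip[OF N _ bx _ by']) auto
  also have "\<dots> \<le> 4 * (4 ^ j * D + e)" using Suc unfolding D_def by simp
  also have "\<dots> \<le> 4 ^ Suc j * (D + e)"
  proof -
    have "1 \<le> (4::real) ^ j" by simp
    then have "4 * e \<le> 4 * 4 ^ j * e" using D0 by (simp add: mult_left_mono mult_right_mono)
    then show ?thesis by (simp add: algebra_simps)
  qed
  also have "D + e = (\<Sum>m\<le>Suc j. \<bar>x (v m) - y (v m)\<bar>)" unfolding D_def e_def by simp
  finally show ?case .
qed

theorem corollary33:
  fixes d :: nat and \<alpha> :: "nat \<Rightarrow> nat" and k W L :: nat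
  assumes "k = (\<Sum>i<d. \<alpha> i)" and "k \<ge> 2"
    and "W \<ge> 1" and "L \<ge> 1"
  shows "\<exists>\<phi>\<in>NN d (9 * W + k - 1) ((k - 1) * (L + 1)).
    \<forall>x y. (\<forall>i<d. \<bar>x i\<bar> \<le> 1) \<longrightarrow> (\<forall>i<d. \<bar>y i\<bar> \<le> 1) \<longrightarrow>
      \<bar>\<phi> x\<bar> \<le> 1 \<and>
      \<bar>\<phi> x - (\<Prod>i<d. x i ^ \<alpha> i)\<bar> \<le> 6 * real (k - 1) / real W ^ L \<and>
      \<bar>\<phi> x - \<phi> y\<bar> \<le> 7 ^ (k - 1) * real (Max (\<alpha> ` {..<d})) * (\<Sum>i<d. \<bar>x i - y i\<bar>)"
proof -
  define n where "n = W + 1"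
  define vl where "vl = vlist \<alpha> d"
  define v where "v = (\<lambda>m. vl ! m)"
  have n1: "1 \<le> n" unfolding n_def by simp
  have len: "length vl = k" unfolding vl_def vlist_len assms(1) ..
  have v: "v m < d" if "m < k" for m
    using vlist_set[of \<alpha> d] that len unfolding v_def vl_def by (auto simp: subset_iff)
  define \<phi> where "\<phi> = (\<lambda>x. Gn n L k d v (k - 1) x 0)"
  have kk: "k - 1 < k" using assms by simp
  have "\<phi> \<in> NN d (9 * W + k - 1) ((k - 1) * (L + 1))"
    unfolding \<phi>_def
    by (rule realizes_NN[OF realizes_Gn[OF n1 assms(4)]]) (use assms in \<open>auto simp: n_def\<close>)
  moreover have "\<forall>x y. (\<forall>i<d. \<bar>x i\<bar> \<le> 1) \<longrightarrow> (\<forall>i<d. \<bar>y i\<bar> \<le> 1) \<longrightarrow>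
      \<bar>\<phi> x\<bar> \<le> 1 \<and>
      \<bar>\<phi> x - (\<Prod>i<d. x i ^ \<alpha> i)\<bar> \<le> 6 * real (k - 1) / real W ^ L \<and>
      \<bar>\<phi> x - \<phi> y\<bar> \<le> 7 ^ (k - 1) * real (Max (\<alpha> ` {..<d})) * (\<Sum>i<d. \<bar>x i - y i\<bar>)"
  proof (intro allI impI)
    fix x y :: "nat \<Rightarrow> real"
    assume x: "\<forall>i<d. \<bar>x i\<bar> \<le> 1" and y: "\<forall>i<d. \<bar>y i\<bar> \<le> 1"
    note I = Gn_inv[where v = v and x = x and L = L and j = "k - 1" and d = d and k = k and n = n, OF n1 v _ kk]
    have atm: "{..k - 1} = {..<k}" using assms by auto
    have P: "(\<Prod>m\<le>k - 1. x (v m)) = (\<Prod>i<d. x i ^ \<alpha> i)"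
      unfolding atm using prod_nth[where xs = vl and f = x] vlist_prod[of x \<alpha> d] len unfolding v_def vl_def by simp
    show "\<bar>\<phi> x\<bar> \<le> 1 \<and>
      \<bar>\<phi> x - (\<Prod>i<d. x i ^ \<alpha> i)\<bar> \<le> 6 * real (k - 1) / real W ^ L \<and>
      \<bar>\<phi> x - \<phi> y\<bar> \<le> 7 ^ (k - 1) * real (Max (\<alpha> ` {..<d})) * (\<Sum>i<d. \<bar>x i - y i\<bar>)"
    proof (intro conjI)
      show "\<bar>\<phi> x\<bar> \<le> 1" using I x unfolding \<phi>_def by auto
      have e: "\<bar>\<phi> x - (\<Prod>i<d. x i ^ \<alpha> i)\<bar> \<le> real (k - 1) * (2 / real (n ^ L) ^ 2)"
        using I x P unfolding \<phi>_def by auto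
      have WL: "real W ^ L \<le> real (n ^ L) ^ 2"
      proof -
        have "real W ^ L \<le> real n ^ L" unfolding n_def by (intro power_mono) auto
        also have "\<dots> \<le> (real n ^ L) ^ 2"
        proof -
          have h: "1 \<le> real n ^ L" using n1 by simp
          have "1 * real n ^ L \<le> real n ^ L * real n ^ L" by (rule mult_right_mono) (use h in auto)
          then show ?thesis by (simp add: power2_eq_square)
        qed
        finally show ?thesis by simp
      qed
      have Wp: "0 < real W ^ L" using assms by simp
      have "2 / real (n ^ L) ^ 2 \<le> 2 / real W ^ L"
        using WL Wp n1 by (intro divide_left_mono mult_pos_pos) auto
      also have "\<dots> \<le> 6 / real W ^ L" using Wp by (intro divide_right_mono) auto
      finally have "real (k - 1) * (2 / real (n ^ L) ^ 2) \<le> real (k - 1) * (6 / real W ^ L)"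
        by (intro mult_left_mono) auto
      moreover have "6 * real (k - 1) / real W ^ L = real (k - 1) * (6 / real W ^ L)" by simp
      ultimately show "\<bar>\<phi> x - (\<Prod>i<d. x i ^ \<alpha> i)\<bar> \<le> 6 * real (k - 1) / real W ^ L" using e by linarith
      have l: "\<bar>\<phi> x - \<phi> y\<bar> \<le> 4 ^ (k - 1) * (\<Sum>m\<le>k - 1. \<bar>x (v m) - y (v m)\<bar>)"
        unfolding \<phi>_def using x y by (intro Gn_lip[where v = v and d = d and k = k and n = n and j = "k - 1", OF n1 v _ _ kk]) auto
      have s: "(\<Sum>m\<le>k - 1. \<bar>x (v m) - y (v m)\<bar>) = (\<Sum>i<d. real (\<alpha> i) * \<bar>x i - y i\<bar>)"
        unfolding atm using sum_nth[where xs = vl and f = "\<lambda>i. \<bar>x i - y i\<bar>"] vlist_sum[of "\<lambda>i. \<bar>x i - y i\<bar>" \<alpha> d] len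
        unfolding v_def vl_def by simp
      have mx: "real (\<alpha> i) \<le> real (Max (\<alpha> ` {..<d}))" if "i < d" for i
        using that by simp
      have "(\<Sum>i<d. real (\<alpha> i) * \<bar>x i - y i\<bar>) \<le> (\<Sum>i<d. real (Max (\<alpha> ` {..<d})) * \<bar>x i - y i\<bar>)"
        by (intro sum_mono mult_right_mono mx) auto
      also have "\<dots> = real (Max (\<alpha> ` {..<d})) * (\<Sum>i<d. \<bar>x i - y i\<bar>)" by (simp add: sum_distrib_left)
      finally have s2: "(\<Sum>m\<le>k - 1. \<bar>x (v m) - y (v m)\<bar>) \<le> real (Max (\<alpha> ` {..<d})) * (\<Sum>i<d. \<bar>x i - y i\<bar>)"
        unfolding s .
      have "(4::real) ^ (k - 1) \<le> 7 ^ (k - 1)" by (intro power_mono) auto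
      moreover have "0 \<le> real (Max (\<alpha> ` {..<d})) * (\<Sum>i<d. \<bar>x i - y i\<bar>)" by (intro mult_nonneg_nonneg sum_nonneg) auto
      moreover have "0 \<le> (\<Sum>m\<le>k - 1. \<bar>x (v m) - y (v m)\<bar>)" by (intro sum_nonneg) auto
      ultimately have "4 ^ (k - 1) * (\<Sum>m\<le>k - 1. \<bar>x (v m) - y (v m)\<bar>)
          \<le> 7 ^ (k - 1) * (real (Max (\<alpha> ` {..<d})) * (\<Sum>i<d. \<bar>x i - y i\<bar>))"
        using s2 by (intro mult_mono) auto
      then show "\<bar>\<phi> x - \<phi> y\<bar> \<le> 7 ^ (k - 1) * real (Max (\<alpha> ` {..<d})) * (\<Sum>i<d. \<bar>x i - y i\<bar>)"
        using l by (simp add: mult.assoc)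
    qed
  qed
  ultimately show ?thesis by blast
qed

end
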